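(* Let $V$ be a complex vector space of dimension $n$ and let $K\subseteq\bigwedge^2V$ be a subspace of dimension $2n-3$ such that $\mathbf{P}(K^\perp)\cap\mathrm{Gr}_2(V^\vee)\neq\emptyset$. Then $\dim W_q(V,K)\geq q+1$ for all $q\geq 0$.
   Context: $K^\perp\subseteq\bigwedge^2V^\vee$ is the annihilator of $K$, and $\mathrm{Gr}_2(V^\vee)\subseteq\mathbf{P}(\bigwedge^2V^\vee)$ is the Plücker embedding. $W_q(V,K)$ is the middle cohomology of $K\otimes\operatorname{Sym}^qV\to V\otimes\operatorname{Sym}^{q+1}V\to\operatorname{Sym}^{q+2}V$, with the first map the restriction of the Koszul differential $v_1\wedge v_2\otimes f\mapsto v_2\otimes v_1f-v_1\otimes v_2f$ and the second multiplication. *)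

theory Defs
  imports Complex_Main "HOL-Library.Function_Algebras"
begin

text \<open>Coordinates: V = C^n with basis e_0..e_(n-1); Sym^q V = homogeneous polynomials of
degree q in x_0..x_(n-1), stored as coefficient functions on exponent vectors.\<close>

definition scaleF :: "complex \<Rightarrow> ('a \<Rightarrow> complex) \<Rightarrow> ('a \<Rightarrow> complex)" where
  "scaleF c f = (\<lambda>x. c * f x)"

definition dimC :: "('a \<Rightarrow> complex) set \<Rightarrow> nat" where
  "dimC S = vector_space.dim scaleF S"

definition subspC :: "('a \<Rightarrow> complex) set \<Rightarrow> bool" where
  "subspC S = module.subspace scaleF S"

definition mons :: "nat \<Rightarrow> nat \<Rightarrow> (nat \<Rightarrow> nat) set" where
  "mons n q = {\<alpha>. (\<forall>i\<ge>n. \<alpha> i = 0) \<and> (\<Sum>i<n. \<alpha> i) = q}"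

text \<open>wedge^2 V: coordinates k(i,j) w.r.t. e_i \<and> e_j, i<j<n\<close>
definition wedge2 :: "nat \<Rightarrow> (nat \<times> nat \<Rightarrow> complex) set" where
  "wedge2 n = {k. \<forall>i j. \<not> (i < j \<and> j < n) \<longrightarrow> k (i, j) = 0}"

text \<open>V (x) Sym^q V: coordinates u(l,alpha) w.r.t. e_l (x) x^alpha\<close>
definition VSym :: "nat \<Rightarrow> nat \<Rightarrow> (nat \<times> (nat \<Rightarrow> nat) \<Rightarrow> complex) set" where
  "VSym n q = {u. \<forall>l \<alpha>. \<not> (l < n \<and> \<alpha> \<in> mons n q) \<longrightarrow> u (l, \<alpha>) = 0}"

text \<open>K (x) Sym^q V inside wedge^2 V (x) Sym^q V: coordinates t((i,j),alpha)\<close>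
definition KSym :: "nat \<Rightarrow> (nat \<times> nat \<Rightarrow> complex) set \<Rightarrow> nat \<Rightarrow>
    ((nat \<times> nat) \<times> (nat \<Rightarrow> nat) \<Rightarrow> complex) set" where
  "KSym n K q = {t. (\<forall>ij \<alpha>. \<alpha> \<notin> mons n q \<longrightarrow> t (ij, \<alpha>) = 0) \<and>
                     (\<forall>\<alpha>. (\<lambda>ij. t (ij, \<alpha>)) \<in> K)}"

text \<open>multiplication of a polynomial by the variable x_i\<close>
definition mulx :: "nat \<Rightarrow> ((nat \<Rightarrow> nat) \<Rightarrow> complex) \<Rightarrow> ((nat \<Rightarrow> nat) \<Rightarrow> complex)" where
  "mulx i f = (\<lambda>\<beta>. if 0 < \<beta> i then f (\<beta>(i := \<beta> i - 1)) else 0)"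

text \<open>Koszul differential: e_i \<and> e_j (x) f  \<mapsto>  e_j (x) x_i f - e_i (x) x_j f\<close>
definition koszul :: "nat \<Rightarrow> ((nat \<times> nat) \<times> (nat \<Rightarrow> nat) \<Rightarrow> complex) \<Rightarrow>
    (nat \<times> (nat \<Rightarrow> nat) \<Rightarrow> complex)" where
  "koszul n t = (\<lambda>(l, \<beta>). \<Sum>i<n. mulx i (\<lambda>\<alpha>. t ((i, l), \<alpha>) - t ((l, i), \<alpha>)) \<beta>)"

text \<open>multiplication V (x) Sym^(q+1) V \<rightarrow> Sym^(q+2) V\<close>
definition multV :: "nat \<Rightarrow> (nat \<times> (nat \<Rightarrow> nat) \<Rightarrow> complex) \<Rightarrow> ((nat \<Rightarrow> nat) \<Rightarrow> complex)" where
  "multV n u = (\<lambda>\<beta>. \<Sum>l<n. mulx l (\<lambda>\<alpha>. u (l, \<alpha>)) \<beta>)"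

definition dimW :: "nat \<Rightarrow> (nat \<times> nat \<Rightarrow> complex) set \<Rightarrow> nat \<Rightarrow> nat" where
  "dimW n K q = dimC {u \<in> VSym n (q + 1). multV n u = 0} - dimC (koszul n ` KSym n K q)"

text \<open>pairing of phi \<and> psi (phi, psi in V^dual) with k in wedge^2 V\<close>
definition pair2 :: "nat \<Rightarrow> (nat \<Rightarrow> complex) \<Rightarrow> (nat \<Rightarrow> complex) \<Rightarrow> (nat \<times> nat \<Rightarrow> complex) \<Rightarrow> complex" where
  "pair2 n \<phi> \<psi> k = (\<Sum>j<n. \<Sum>i<j. k (i, j) * (\<phi> i * \<psi> j - \<phi> j * \<psi> i))"

definition lin_indep2 :: "nat \<Rightarrow> (nat \<Rightarrow> complex) \<Rightarrow> (nat \<Rightarrow> complex) \<Rightarrow> bool" where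
  "lin_indep2 n \<phi> \<psi> = (\<forall>a b. (\<forall>i<n. a * \<phi> i + b * \<psi> i = 0) \<longrightarrow> a = 0 \<and> b = 0)"

text \<open>P(K^perp) meets Gr_2(V^dual): some nonzero decomposable phi \<and> psi annihilates K\<close>
definition meets_Gr2 :: "nat \<Rightarrow> (nat \<times> nat \<Rightarrow> complex) set \<Rightarrow> bool" where
  "meets_Gr2 n K = (\<exists>\<phi> \<psi>. lin_indep2 n \<phi> \<psi> \<and> (\<forall>k\<in>K. pair2 n \<phi> \<psi> k = 0))"

end

theory Submission
  imports Defs "HOL-Computational_Algebra.Polynomial" "HOL-Library.FuncSet"
begin

lemma sum_fun_app: "(sum f A) x = (\<Sum>a\<in>A. f a x)"
  by (induct A rule: infinite_finite_induct) auto

lemma vsF: "vector_space (scaleF :: complex \<Rightarrow> ('a \<Rightarrow> complex) \<Rightarrow> _)"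
  by unfold_locales (auto simp: scaleF_def fun_eq_iff algebra_simps)

interpretation vs: vector_space "scaleF :: complex \<Rightarrow> ('a \<Rightarrow> complex) \<Rightarrow> _"
  by (rule vsF)

lemma finite_mons: "finite (mons n q)"
proof -
  have "mons n q \<subseteq> (\<lambda>f i. if i < n then f i else 0) ` ({..<n} \<rightarrow>\<^sub>E {..q})"
  proof
    fix \<alpha> assume a: "\<alpha> \<in> mons n q"
    have le: "\<alpha> i \<le> q" if "i < n" for i
    proof -
      have "\<alpha> i \<le> (\<Sum>i<n. \<alpha> i)" using that by (intro member_le_sum) auto
      thus ?thesis using a by (simp add: mons_def)
    qed
    have "\<alpha> = (\<lambda>i. if i < n then restrict \<alpha> {..<n} i else 0)"
      using a by (auto simp: mons_def fun_eq_iff)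
    moreover have "restrict \<alpha> {..<n} \<in> {..<n} \<rightarrow>\<^sub>E {..q}" using le by auto
    ultimately show "\<alpha> \<in> (\<lambda>f i. if i < n then f i else 0) ` ({..<n} \<rightarrow>\<^sub>E {..q})" by blast
  qed
  moreover have "finite ({..<n} \<rightarrow>\<^sub>E {..q})" by (intro finite_PiE) auto
  ultimately show ?thesis by (meson finite_imageI finite_subset)
qed

lemma minor_exists:
  assumes "lin_indep2 n \<phi> \<psi>"
  shows "\<exists>i j. i < j \<and> j < n \<and> \<phi> i * \<psi> j - \<phi> j * \<psi> i \<noteq> 0"
proof (rule ccontr)
  assume na: "\<not> ?thesis"
  have m: "\<phi> a * \<psi> b = \<phi> b * \<psi> a" if "a < n" "b < n" for a b
  proof -
    consider "a < b" | "a = b" | "b < a" by arith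
    thus ?thesis
    proof cases
      case 1 thus ?thesis using na that by auto
    next
      case 2 thus ?thesis by simp
    next
      case 3 thus ?thesis using na that by (metis eq_iff_diff_eq_0 mult.commute)
    qed
  qed
  show False
  proof (cases "\<forall>i<n. \<phi> i = 0")
    case True
    hence "\<forall>i<n. 1 * \<phi> i + 0 * \<psi> i = 0" by simp
    thus False using assms[unfolded lin_indep2_def, rule_format, of 1 0] by simp
  next
    case False
    then obtain i where i: "i < n" "\<phi> i \<noteq> 0" by auto
    have "\<forall>k<n. \<psi> i * \<phi> k + (- \<phi> i) * \<psi> k = 0"
    proof (intro allI impI)
      fix k assume "k < n"
      from m[OF i(1) this] show "\<psi> i * \<phi> k + (- \<phi> i) * \<psi> k = 0"
        by (simp add: mult.commute)
    qed
    thus False using assms[unfolded lin_indep2_def, rule_format, of "\<psi> i" "- \<phi> i"] i by simp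
  qed
qed

lemma normalize_pair:
  assumes "meets_Gr2 n K"
  shows "\<exists>\<phi> \<psi> i j. i < j \<and> j < n \<and> \<phi> i = 1 \<and> \<phi> j = 0 \<and> \<psi> i = 0 \<and> \<psi> j = 1
            \<and> (\<forall>k\<in>K. pair2 n \<phi> \<psi> k = 0)"
proof -
  obtain \<phi> \<psi> where li: "lin_indep2 n \<phi> \<psi>" and z: "\<forall>k\<in>K. pair2 n \<phi> \<psi> k = 0"
    using assms unfolding meets_Gr2_def by blast
  obtain i j where ij: "i < j" "j < n" and D: "\<phi> i * \<psi> j - \<phi> j * \<psi> i \<noteq> 0"
    using minor_exists[OF li] by blast
  define d where "d = \<phi> i * \<psi> j - \<phi> j * \<psi> i"
  define \<phi>' where "\<phi>' = (\<lambda>m. (\<psi> j * \<phi> m - \<phi> j * \<psi> m) / d)"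
  define \<psi>' where "\<psi>' = (\<lambda>m. (\<phi> i * \<psi> m - \<psi> i * \<phi> m) / d)"
  have dn: "d \<noteq> 0" using D d_def by simp
  have key: "\<phi>' a * \<psi>' b - \<phi>' b * \<psi>' a = (\<phi> a * \<psi> b - \<phi> b * \<psi> a) / d" for a b
  proof -
    have e: "(\<psi> j * \<phi> a - \<phi> j * \<psi> a) * (\<phi> i * \<psi> b - \<psi> i * \<phi> b)
        - (\<psi> j * \<phi> b - \<phi> j * \<psi> b) * (\<phi> i * \<psi> a - \<psi> i * \<phi> a)
        = d * (\<phi> a * \<psi> b - \<phi> b * \<psi> a)" unfolding d_def by algebra
    have "\<phi>' a * \<psi>' b - \<phi>' b * \<psi>' a =
      ((\<psi> j * \<phi> a - \<phi> j * \<psi> a) * (\<phi> i * \<psi> b - \<psi> i * \<phi> b)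
        - (\<psi> j * \<phi> b - \<phi> j * \<psi> b) * (\<phi> i * \<psi> a - \<psi> i * \<phi> a)) / (d * d)"
      unfolding \<phi>'_def \<psi>'_def by (simp only: times_divide_times_eq diff_divide_distrib[symmetric])
    also have "\<dots> = d * (\<phi> a * \<psi> b - \<phi> b * \<psi> a) / (d * d)" by (simp only: e)
    also have "\<dots> = (\<phi> a * \<psi> b - \<phi> b * \<psi> a) / d" using dn by simp
    finally show ?thesis .
  qed
  have "pair2 n \<phi>' \<psi>' k = pair2 n \<phi> \<psi> k / d" for k
    unfolding pair2_def key by (simp add: sum_divide_distrib)
  hence "\<forall>k\<in>K. pair2 n \<phi>' \<psi>' k = 0" using z by simp
  moreover have "\<phi>' i = 1" "\<phi>' j = 0" "\<psi>' i = 0" "\<psi>' j = 1"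
    using dn unfolding \<phi>'_def \<psi>'_def d_def by (auto simp: field_simps)
  ultimately show ?thesis using ij by blast
qed

lemma mulx_sum: "mulx l (\<lambda>\<alpha>. \<Sum>i\<in>I. h i \<alpha>) \<beta> = (\<Sum>i\<in>I. mulx l (h i) \<beta>)"
  by (simp add: mulx_def)

lemma mulx_neg: "mulx l (\<lambda>\<alpha>. - f \<alpha>) = (\<lambda>\<beta>. - mulx l f \<beta>)"
  by (simp add: mulx_def fun_eq_iff)

lemma mulx_comm: "mulx l (mulx i f) \<beta> = mulx i (mulx l f) \<beta>"
proof (cases "l = i")
  case False
  hence "\<beta>(l := \<beta> l - 1, i := \<beta> i - 1) = \<beta>(i := \<beta> i - 1, l := \<beta> l - 1)"
    by (rule fun_upd_twist)
  thus ?thesis using False by (simp add: mulx_def)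
qed simp

lemma multV_koszul: "multV n (koszul n t) = 0"
proof
  fix \<beta>
  define g where "g = (\<lambda>i l \<alpha>. t ((i, l), \<alpha>) - t ((l, i), \<alpha>))"
  define F where "F = (\<lambda>l i. mulx l (mulx i (g i l)) \<beta>)"
  have gs: "g l i = (\<lambda>\<alpha>. - g i l \<alpha>)" for i l by (simp add: g_def fun_eq_iff)
  have Fa: "F i l = - F l i" for i l
  proof -
    have "F i l = mulx l (mulx i (g l i)) \<beta>" unfolding F_def by (rule mulx_comm)
    also have "\<dots> = - F l i" unfolding F_def by (subst gs[of i l]) (simp only: mulx_neg minus_minus)
    finally show ?thesis .
  qed
  have k: "(\<lambda>\<alpha>. koszul n t (l, \<alpha>)) = (\<lambda>\<alpha>. \<Sum>i<n. mulx i (g i l) \<alpha>)" for l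
    unfolding koszul_def g_def by simp
  have "multV n (koszul n t) \<beta> = (\<Sum>l<n. mulx l (\<lambda>\<alpha>. \<Sum>i<n. mulx i (g i l) \<alpha>) \<beta>)"
    unfolding multV_def k ..
  also have "\<dots> = (\<Sum>l<n. \<Sum>i<n. F l i)" unfolding F_def by (simp only: mulx_sum)
  also have "(\<Sum>l<n. \<Sum>i<n. F l i) = (\<Sum>i<n. \<Sum>l<n. F l i)" by (rule sum.swap)
  also have "\<dots> = (\<Sum>i<n. \<Sum>l<n. - F i l)"
    by (intro sum.cong refl) (rule Fa)
  also have "\<dots> = - (\<Sum>i<n. \<Sum>l<n. F i l)"
    by (simp only: sum_negf)
  finally have "multV n (koszul n t) \<beta> = - (\<Sum>l<n. \<Sum>i<n. F l i)" .
  moreover have "multV n (koszul n t) \<beta> = (\<Sum>l<n. \<Sum>i<n. F l i)"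
    unfolding multV_def k F_def by (simp only: mulx_sum)
  ultimately have "multV n (koszul n t) \<beta> = - multV n (koszul n t) \<beta>" by (simp only:)
  thus "multV n (koszul n t) \<beta> = 0 \<beta>" by simp
qed

lemma sum_upd_nat:
  fixes n :: nat
  assumes "i < n"
  shows "(\<Sum>m<n. (f(i := x)) m) + f i = (\<Sum>m<n. f m) + (x::nat)"
proof -
  have "(\<Sum>m<n. (f(i := x)) m) = (f(i := x)) i + (\<Sum>m\<in>{..<n} - {i}. (f(i := x)) m)"
    using assms by (intro sum.remove) auto
  also have "\<dots> = x + (\<Sum>m\<in>{..<n} - {i}. f m)"
    by (simp only: fun_upd_same) (intro arg_cong[where f="\<lambda>y. x + y"] sum.cong refl, auto)
  finally have "(\<Sum>m<n. (f(i := x)) m) = x + (\<Sum>m\<in>{..<n} - {i}. f m)" .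
  moreover have "(\<Sum>m<n. f m) = f i + (\<Sum>m\<in>{..<n} - {i}. f m)"
    using assms by (simp add: sum.remove[of "{..<n}" i])
  ultimately show ?thesis by simp
qed

lemma mons_dec:
  assumes "i < n" "0 < \<beta> i"
  shows "\<beta>(i := \<beta> i - 1) \<in> mons n q \<longleftrightarrow> \<beta> \<in> mons n (Suc q)"
proof -
  have s: "(\<Sum>m<n. (\<beta>(i := \<beta> i - 1)) m) + \<beta> i = (\<Sum>m<n. \<beta> m) + (\<beta> i - 1)"
    by (rule sum_upd_nat[OF assms(1)])
  have z: "(\<forall>m\<ge>n. (\<beta>(i := \<beta> i - 1)) m = 0) \<longleftrightarrow> (\<forall>m\<ge>n. \<beta> m = 0)"
    using assms(1) by auto
  show ?thesis unfolding mons_def using s z assms(2) by auto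
qed

lemma mons_inc:
  assumes "i < n"
  shows "\<alpha>(i := Suc (\<alpha> i)) \<in> mons n (Suc q) \<longleftrightarrow> \<alpha> \<in> mons n q"
proof -
  have s: "(\<Sum>m<n. (\<alpha>(i := Suc (\<alpha> i))) m) + \<alpha> i = (\<Sum>m<n. \<alpha> m) + Suc (\<alpha> i)"
    by (rule sum_upd_nat[OF assms(1)])
  have z: "(\<forall>m\<ge>n. (\<alpha>(i := Suc (\<alpha> i))) m = 0) \<longleftrightarrow> (\<forall>m\<ge>n. \<alpha> m = 0)"
    using assms(1) by auto
  show ?thesis unfolding mons_def using s z by auto
qed

lemma koszul_VSym:
  assumes W: "\<And>\<alpha>. (\<lambda>ij. t (ij, \<alpha>)) \<in> wedge2 n"
    and S: "\<And>ij \<alpha>. \<alpha> \<notin> mons n q \<Longrightarrow> t (ij, \<alpha>) = 0"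
  shows "koszul n t \<in> VSym n (Suc q)"
  unfolding VSym_def
proof (intro CollectI allI impI)
  fix l \<beta> assume nl: "\<not> (l < n \<and> \<beta> \<in> mons n (Suc q))"
  have "mulx i (\<lambda>\<alpha>. t ((i, l), \<alpha>) - t ((l, i), \<alpha>)) \<beta> = 0" if i: "i < n" for i
  proof (cases "0 < \<beta> i")
    case True
    show ?thesis
    proof (cases "l < n")
      case True
      with nl have "\<beta> \<notin> mons n (Suc q)" by simp
      hence "\<beta>(i := \<beta> i - 1) \<notin> mons n q" using mons_dec[where \<beta>=\<beta> and q=q, OF i \<open>0 < \<beta> i\<close>] by simp
      thus ?thesis using S by (simp add: mulx_def)
    next
      case False
      have "t ((i, l), \<alpha>) = 0" "t ((l, i), \<alpha>) = 0" for \<alpha>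
        using W[of \<alpha>] False i unfolding wedge2_def by auto
      thus ?thesis by (simp add: mulx_def)
    qed
  qed (simp add: mulx_def)
  thus "koszul n t (l, \<beta>) = 0" unfolding koszul_def by simp
qed

definition Apol :: "nat \<Rightarrow> (nat \<Rightarrow> complex) \<Rightarrow> (nat \<Rightarrow> complex) \<Rightarrow> (nat \<Rightarrow> nat) \<Rightarrow> complex poly" where
  "Apol n \<phi> \<psi> \<beta> = (\<Prod>m<n. [:\<phi> m, \<psi> m:] ^ \<beta> m)"

definition Pm :: "nat \<Rightarrow> nat \<Rightarrow> (nat \<Rightarrow> complex) \<Rightarrow> (nat \<Rightarrow> complex) \<Rightarrow>
    (nat \<times> (nat \<Rightarrow> nat) \<Rightarrow> complex) \<Rightarrow> complex poly" where
  "Pm n q \<phi> \<psi> u = (\<Sum>l<n. \<Sum>\<beta>\<in>mons n (Suc q). smult (u (l, \<beta>) * \<psi> l) (Apol n \<phi> \<psi> \<beta>))"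

lemma Apol_inc:
  assumes "i < n"
  shows "Apol n \<phi> \<psi> (\<alpha>(i := Suc (\<alpha> i))) = [:\<phi> i, \<psi> i:] * Apol n \<phi> \<psi> \<alpha>"
proof -
  let ?h = "\<alpha>(i := Suc (\<alpha> i))"
  let ?L = "[:\<phi> i, \<psi> i:]"
  let ?R = "(\<Prod>m\<in>{..<n} - {i}. [:\<phi> m, \<psi> m:] ^ \<alpha> m)"
  have "Apol n \<phi> \<psi> ?h = ?L ^ ?h i * (\<Prod>m\<in>{..<n} - {i}. [:\<phi> m, \<psi> m:] ^ ?h m)"
    unfolding Apol_def using assms by (intro prod.remove) auto
  also have "(\<Prod>m\<in>{..<n} - {i}. [:\<phi> m, \<psi> m:] ^ ?h m) = ?R"
    by (intro prod.cong refl) auto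
  also have "?L ^ ?h i = ?L * ?L ^ \<alpha> i" by simp
  also have "?L * ?L ^ \<alpha> i * ?R = ?L * (?L ^ \<alpha> i * ?R)" by (rule mult.assoc)
  also have "?L ^ \<alpha> i * ?R = Apol n \<phi> \<psi> \<alpha>"
    unfolding Apol_def using assms by (intro prod.remove[symmetric]) auto
  finally show ?thesis .
qed

lemma sum_mulx:
  assumes i: "i < n"
  shows "(\<Sum>\<beta>\<in>mons n (Suc q). smult (mulx i g \<beta> * c) (Apol n \<phi> \<psi> \<beta>))
       = (\<Sum>\<alpha>\<in>mons n q. smult (g \<alpha> * c) ([:\<phi> i, \<psi> i:] * Apol n \<phi> \<psi> \<alpha>))"
proof -
  define h where "h = (\<lambda>\<alpha>::nat\<Rightarrow>nat. \<alpha>(i := Suc (\<alpha> i)))"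
  have "(\<Sum>\<beta>\<in>mons n (Suc q). smult (mulx i g \<beta> * c) (Apol n \<phi> \<psi> \<beta>))
      = (\<Sum>\<beta>\<in>mons n (Suc q). if 0 < \<beta> i then smult (g (\<beta>(i := \<beta> i - 1)) * c) (Apol n \<phi> \<psi> \<beta>) else 0)"
    by (intro sum.cong refl) (simp add: mulx_def)
  also have "\<dots> = (\<Sum>\<beta>\<in>{\<beta>\<in>mons n (Suc q). 0 < \<beta> i}. smult (g (\<beta>(i := \<beta> i - 1)) * c) (Apol n \<phi> \<psi> \<beta>))"
    by (rule sum.inter_filter[OF finite_mons, symmetric])
  also have "{\<beta>\<in>mons n (Suc q). 0 < \<beta> i} = h ` mons n q"
  proof
    show "{\<beta> \<in> mons n (Suc q). 0 < \<beta> i} \<subseteq> h ` mons n q"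
    proof
      fix \<beta> assume b: "\<beta> \<in> {\<beta> \<in> mons n (Suc q). 0 < \<beta> i}"
      hence "\<beta>(i := \<beta> i - 1) \<in> mons n q" using mons_dec[where \<beta>=\<beta> and q=q, OF i] by simp
      moreover have "\<beta> = h (\<beta>(i := \<beta> i - 1))" using b by (auto simp: h_def fun_eq_iff)
      ultimately show "\<beta> \<in> h ` mons n q" by blast
    qed
    show "h ` mons n q \<subseteq> {\<beta> \<in> mons n (Suc q). 0 < \<beta> i}"
      using mons_inc[OF i] by (auto simp: h_def)
  qed
  also have "(\<Sum>\<beta>\<in>h ` mons n q. smult (g (\<beta>(i := \<beta> i - 1)) * c) (Apol n \<phi> \<psi> \<beta>))
      = (\<Sum>\<alpha>\<in>mons n q. smult (g ((h \<alpha>)(i := h \<alpha> i - 1)) * c) (Apol n \<phi> \<psi> (h \<alpha>)))"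
  proof (rule sum.reindex[unfolded comp_def])
    show "inj_on h (mons n q)"
    proof
      fix x y assume e: "h x = h y"
      show "x = y"
      proof
        fix m
        have "h x m = h y m" using e by simp
        thus "x m = y m" by (cases "m = i") (simp_all add: h_def)
      qed
    qed
  qed
  also have "\<dots> = (\<Sum>\<alpha>\<in>mons n q. smult (g \<alpha> * c) ([:\<phi> i, \<psi> i:] * Apol n \<phi> \<psi> \<alpha>))"
  proof (intro sum.cong refl)
    fix \<alpha> :: "nat \<Rightarrow> nat"
    have e1: "(h \<alpha>)(i := h \<alpha> i - 1) = \<alpha>" by (simp add: h_def)
    have e2: "Apol n \<phi> \<psi> (h \<alpha>) = [:\<phi> i, \<psi> i:] * Apol n \<phi> \<psi> \<alpha>" unfolding h_def by (rule Apol_inc[OF i])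
    show "smult (g ((h \<alpha>)(i := h \<alpha> i - 1)) * c) (Apol n \<phi> \<psi> (h \<alpha>)) = smult (g \<alpha> * c) ([:\<phi> i, \<psi> i:] * Apol n \<phi> \<psi> \<alpha>)"
      by (simp only: e1 e2)
  qed
  finally show ?thesis .
qed

lemma sum_const_poly: "(\<Sum>x\<in>A. [:f x:]) = [:\<Sum>x\<in>A. f x:]"
  by (induct A rule: infinite_finite_induct) simp_all

lemma pair2_full:
  assumes k: "k \<in> wedge2 n"
  shows "(\<Sum>l<n. \<Sum>i<n. k (i, l) * (\<phi> i * \<psi> l - \<phi> l * \<psi> i)) = pair2 n \<phi> \<psi> k"
  unfolding pair2_def
proof (rule sum.cong[OF refl])
  fix l assume l: "l \<in> {..<n}"
  show "(\<Sum>i<n. k (i, l) * (\<phi> i * \<psi> l - \<phi> l * \<psi> i)) = (\<Sum>i<l. k (i, l) * (\<phi> i * \<psi> l - \<phi> l * \<psi> i))"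
    by (rule sum.mono_neutral_right) (use l k in \<open>auto simp: wedge2_def\<close>)
qed

lemma inner_poly:
  fixes k :: "nat \<times> nat \<Rightarrow> complex"
  shows "(\<Sum>l<n. \<Sum>i<n. smult ((k (i, l) - k (l, i)) * \<psi> l) [:\<phi> i, \<psi> i:])
     = [:\<Sum>l<n. \<Sum>i<n. k (i, l) * (\<phi> i * \<psi> l - \<phi> l * \<psi> i):]"
proof -
  have "(\<Sum>l<n. \<Sum>i<n. smult ((k (i, l) - k (l, i)) * \<psi> l) [:\<phi> i, \<psi> i:])
      = (\<Sum>l<n. \<Sum>i<n. smult (k (i, l)) (smult (\<psi> l) [:\<phi> i, \<psi> i:]))
        - (\<Sum>l<n. \<Sum>i<n. smult (k (l, i)) (smult (\<psi> l) [:\<phi> i, \<psi> i:]))"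
  proof -
    have "(\<Sum>l<n. \<Sum>i<n. smult ((k (i, l) - k (l, i)) * \<psi> l) [:\<phi> i, \<psi> i:])
      = (\<Sum>l<n. \<Sum>i<n. smult (k (i, l)) (smult (\<psi> l) [:\<phi> i, \<psi> i:]) - smult (k (l, i)) (smult (\<psi> l) [:\<phi> i, \<psi> i:]))"
      by (intro sum.cong refl) (simp add: smult_diff_left left_diff_distrib)
    thus ?thesis by (simp only: sum_subtractf)
  qed
  also have "(\<Sum>l<n. \<Sum>i<n. smult (k (l, i)) (smult (\<psi> l) [:\<phi> i, \<psi> i:]))
      = (\<Sum>l<n. \<Sum>i<n. smult (k (i, l)) (smult (\<psi> i) [:\<phi> l, \<psi> l:]))"
    by (rule sum.swap)
  also have "(\<Sum>l<n. \<Sum>i<n. smult (k (i, l)) (smult (\<psi> l) [:\<phi> i, \<psi> i:]))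
      - (\<Sum>l<n. \<Sum>i<n. smult (k (i, l)) (smult (\<psi> i) [:\<phi> l, \<psi> l:]))
      = (\<Sum>l<n. \<Sum>i<n. smult (k (i, l)) (smult (\<psi> l) [:\<phi> i, \<psi> i:] - smult (\<psi> i) [:\<phi> l, \<psi> l:]))"
    by (simp only: sum_subtractf[symmetric] smult_diff_right[symmetric])
  also have "\<dots> = (\<Sum>l<n. \<Sum>i<n. [:k (i, l) * (\<phi> i * \<psi> l - \<phi> l * \<psi> i):])"
    by (intro sum.cong refl) (simp add: algebra_simps)
  also have "\<dots> = [:\<Sum>l<n. \<Sum>i<n. k (i, l) * (\<phi> i * \<psi> l - \<phi> l * \<psi> i):]"
    by (simp only: sum_const_poly)
  finally show ?thesis .
qed

lemma P_koszul:
  assumes W: "\<And>\<alpha>. (\<lambda>ij. t (ij, \<alpha>)) \<in> wedge2 n"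
  shows "Pm n q \<phi> \<psi> (koszul n t) = (\<Sum>\<alpha>\<in>mons n q. smult (pair2 n \<phi> \<psi> (\<lambda>ij. t (ij, \<alpha>))) (Apol n \<phi> \<psi> \<alpha>))"
proof -
  define g where "g = (\<lambda>i l \<alpha>. t ((i, l), \<alpha>) - t ((l, i), \<alpha>))"
  have k: "koszul n t (l, \<beta>) = (\<Sum>i<n. mulx i (g i l) \<beta>)" for l \<beta>
    unfolding koszul_def g_def by simp
  have "Pm n q \<phi> \<psi> (koszul n t) = (\<Sum>l<n. \<Sum>\<beta>\<in>mons n (Suc q). \<Sum>i<n. smult (mulx i (g i l) \<beta> * \<psi> l) (Apol n \<phi> \<psi> \<beta>))"
    unfolding Pm_def k by (simp only: sum_distrib_right smult_sum)
  also have "\<dots> = (\<Sum>l<n. \<Sum>i<n. \<Sum>\<beta>\<in>mons n (Suc q). smult (mulx i (g i l) \<beta> * \<psi> l) (Apol n \<phi> \<psi> \<beta>))"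
    by (intro sum.cong refl sum.swap)
  also have "\<dots> = (\<Sum>l<n. \<Sum>i<n. \<Sum>\<alpha>\<in>mons n q. smult (g i l \<alpha> * \<psi> l) ([:\<phi> i, \<psi> i:] * Apol n \<phi> \<psi> \<alpha>))"
    by (intro sum.cong refl sum_mulx) simp
  also have "\<dots> = (\<Sum>l<n. \<Sum>\<alpha>\<in>mons n q. \<Sum>i<n. smult (g i l \<alpha> * \<psi> l) ([:\<phi> i, \<psi> i:] * Apol n \<phi> \<psi> \<alpha>))"
    by (intro sum.cong refl sum.swap)
  also have "\<dots> = (\<Sum>\<alpha>\<in>mons n q. \<Sum>l<n. \<Sum>i<n. smult (g i l \<alpha> * \<psi> l) ([:\<phi> i, \<psi> i:] * Apol n \<phi> \<psi> \<alpha>))"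
    by (rule sum.swap)
  also have "\<dots> = (\<Sum>\<alpha>\<in>mons n q. smult (pair2 n \<phi> \<psi> (\<lambda>ij. t (ij, \<alpha>))) (Apol n \<phi> \<psi> \<alpha>))"
  proof (intro sum.cong refl)
    fix \<alpha>
    have "(\<Sum>l<n. \<Sum>i<n. smult (g i l \<alpha> * \<psi> l) ([:\<phi> i, \<psi> i:] * Apol n \<phi> \<psi> \<alpha>))
        = (\<Sum>l<n. \<Sum>i<n. smult ((t ((i, l), \<alpha>) - t ((l, i), \<alpha>)) * \<psi> l) [:\<phi> i, \<psi> i:]) * Apol n \<phi> \<psi> \<alpha>"
      by (simp only: sum_distrib_right mult_smult_left g_def)
    also have "\<dots> = [:\<Sum>l<n. \<Sum>i<n. t ((i, l), \<alpha>) * (\<phi> i * \<psi> l - \<phi> l * \<psi> i):] * Apol n \<phi> \<psi> \<alpha>"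
      using inner_poly[of "\<lambda>ij. t (ij, \<alpha>)" \<psi> \<phi> n] by simp
    also have "\<dots> = smult (pair2 n \<phi> \<psi> (\<lambda>ij. t (ij, \<alpha>))) (Apol n \<phi> \<psi> \<alpha>)"
      using pair2_full[OF W[of \<alpha>], of \<phi> \<psi>] by simp
    finally show "(\<Sum>l<n. \<Sum>i<n. smult (g i l \<alpha> * \<psi> l) ([:\<phi> i, \<psi> i:] * Apol n \<phi> \<psi> \<alpha>))
        = smult (pair2 n \<phi> \<psi> (\<lambda>ij. t (ij, \<alpha>))) (Apol n \<phi> \<psi> \<alpha>)" .
  qed
  finally show ?thesis .
qed

lemma dim_bound:
  fixes U Ker S :: "('a \<Rightarrow> complex) set" and Pf :: "('a \<Rightarrow> complex) \<Rightarrow> complex poly"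
    and u :: "nat \<Rightarrow> ('a \<Rightarrow> complex)"
  assumes KS: "Ker \<subseteq> vs.span S" and fS: "finite S" and UK: "U \<subseteq> Ker"
    and PU: "\<And>v. v \<in> U \<Longrightarrow> Pf v = 0"
    and uK: "\<And>c. c \<le> q \<Longrightarrow> u c \<in> Ker"
    and Pu: "\<And>c. c \<le> q \<Longrightarrow> Pf (u c) = monom 1 c"
    and Padd: "\<And>x y. Pf (x + y) = Pf x + Pf y"
    and Psc: "\<And>a x. Pf (scaleF a x) = smult a (Pf x)"
    and P0: "Pf 0 = 0"
  shows "dimC U + (q + 1) \<le> dimC Ker"
proof -
  obtain B where BU: "B \<subseteq> U" and iB: "vs.independent B" and UB: "U \<subseteq> vs.span B"
    and cB: "card B = vs.dim U"
    using vs.basis_exists[of U] by blast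
  have "B \<subseteq> vs.span S" using BU UK KS by blast
  hence fB: "finite B" using vs.independent_span_bound[OF fS iB] by simp
  have ind: "vs.independent (B \<union> u ` {..<c}) \<and> card (B \<union> u ` {..<c}) = card B + c" if "c \<le> q + 1" for c
    using that
  proof (induction c)
    case 0 thus ?case using iB by simp
  next
    case (Suc c)
    let ?T = "B \<union> u ` {..<c}"
    have IH: "vs.independent ?T" "card ?T = card B + c" using Suc by auto
    have cq: "c \<le> q" using Suc.prems by simp
    have sub: "vs.subspace {v. coeff (Pf v) c = 0}"
    proof (rule vs.subspaceI)
      show "0 \<in> {v. coeff (Pf v) c = 0}" using P0 by simp
      fix x y assume "x \<in> {v. coeff (Pf v) c = 0}" "y \<in> {v. coeff (Pf v) c = 0}"
      thus "x + y \<in> {v. coeff (Pf v) c = 0}" by (simp add: Padd coeff_add)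
    next
      fix a x assume "x \<in> {v. coeff (Pf v) c = 0}"
      thus "scaleF a x \<in> {v. coeff (Pf v) c = 0}" by (simp add: Psc)
    qed
    have Z: "coeff (Pf v) c = 0" if "v \<in> vs.span ?T" for v
      using that
    proof (induction rule: vs.span_induct)
      case (step x) thus ?case
      proof
        assume "x \<in> B" thus ?thesis using PU BU by auto
      next
        assume "x \<in> u ` {..<c}"
        then obtain d where "d < c" "x = u d" by auto
        thus ?thesis using Pu[of d] cq by simp
      qed
    qed (rule sub)
    have one: "coeff (Pf (u c)) c = 1" using Pu[OF cq] by simp
    have nin: "u c \<notin> vs.span ?T"
    proof
      assume "u c \<in> vs.span ?T"
      from Z[OF this] one show False by simp
    qed
    have nin2: "u c \<notin> ?T"
    proof
      assume "u c \<in> ?T"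
      hence "u c \<in> vs.span ?T" by (rule vs.span_base)
      with nin show False by contradiction
    qed
    have eq: "B \<union> u ` {..<Suc c} = insert (u c) ?T" by (auto simp: lessThan_Suc)
    have "vs.independent (insert (u c) ?T)" by (rule vs.independent_insertI[OF nin IH(1)])
    moreover have "card (insert (u c) ?T) = card B + Suc c"
      using nin2 fB IH(2) by simp
    ultimately show ?case unfolding eq by simp
  qed
  let ?T = "B \<union> u ` {..<q+1}"
  have T: "vs.independent ?T" "card ?T = card B + (q + 1)" using ind[of "q+1"] by auto
  have TK: "?T \<subseteq> Ker" using BU UK uK by auto
  obtain B' where B'K: "B' \<subseteq> Ker" and iB': "vs.independent B'" and KB': "Ker \<subseteq> vs.span B'"
    and cB': "card B' = vs.dim Ker"
    using vs.basis_exists[of Ker] by blast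
  have "B' \<subseteq> vs.span S" using B'K KS by blast
  hence fB': "finite B'" using vs.independent_span_bound[OF fS iB'] by simp
  have "?T \<subseteq> vs.span B'" using TK KB' by blast
  hence "card ?T \<le> card B'" using vs.independent_span_bound[OF fB' T(1)] by simp
  thus ?thesis using T(2) cB cB' unfolding dimC_def by simp
qed

lemma smult_sum_right: "smult a (\<Sum>x\<in>A. f x) = (\<Sum>x\<in>A. smult a (f x))"
  by (induct A rule: infinite_finite_induct) (simp_all add: smult_add_right)

lemma Pm_add: "Pm n q \<phi> \<psi> (u + v) = Pm n q \<phi> \<psi> u + Pm n q \<phi> \<psi> v"
  unfolding Pm_def by (simp add: distrib_right smult_add_left sum.distrib)

lemma Pm_scale: "Pm n q \<phi> \<psi> (scaleF a u) = smult a (Pm n q \<phi> \<psi> u)"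
  unfolding Pm_def by (simp add: scaleF_def smult_sum_right mult.assoc)

lemma Pm_zero: "Pm n q \<phi> \<psi> 0 = 0"
  unfolding Pm_def by simp

lemma VSym_span:
  "VSym n q \<subseteq> vs.span ((\<lambda>p. (\<lambda>x. if x = p then 1 else 0)) ` ({..<n} \<times> mons n q))"
proof
  fix u assume u: "u \<in> VSym n q"
  let ?F = "{..<n} \<times> mons n q"
  let ?d = "\<lambda>p. (\<lambda>x. if x = p then (1::complex) else 0)"
  have fF: "finite ?F" using finite_mons by simp
  have "u = (\<Sum>p\<in>?F. scaleF (u p) (?d p))"
  proof
    fix x
    have "(\<Sum>p\<in>?F. scaleF (u p) (?d p)) x = (\<Sum>p\<in>?F. if x = p then u p else 0)"
      unfolding sum_fun_app scaleF_def by (intro sum.cong refl) simp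
    also have "\<dots> = (if x \<in> ?F then u x else 0)" using fF by (simp add: sum.delta)
    also have "\<dots> = u x" using u unfolding VSym_def by (cases x) auto
    finally show "u x = (\<Sum>p\<in>?F. scaleF (u p) (?d p)) x" by simp
  qed
  also have "\<dots> \<in> vs.span (?d ` ?F)"
    by (intro vs.span_sum vs.span_scale vs.span_base) auto
  finally show "u \<in> vs.span (?d ` ?F)" .
qed

definition ac :: "nat \<Rightarrow> nat \<Rightarrow> nat \<Rightarrow> nat \<Rightarrow> (nat \<Rightarrow> nat)" where
  "ac i j q c = (\<lambda>_. 0)(i := q - c, j := c)"

definition tc :: "nat \<Rightarrow> nat \<Rightarrow> nat \<Rightarrow> nat \<Rightarrow> ((nat \<times> nat) \<times> (nat \<Rightarrow> nat) \<Rightarrow> complex)" where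
  "tc i j q c = (\<lambda>(ij, \<alpha>). if ij = (i, j) \<and> \<alpha> = ac i j q c then 1 else 0)"

lemma ac_mons:
  assumes "i < j" "j < n" "c \<le> q"
  shows "ac i j q c \<in> mons n q"
proof -
  let ?f0 = "((\<lambda>_. 0::nat)(i := q - c))"
  have s1: "(\<Sum>m<n. (?f0(j := c)) m) + ?f0 j = (\<Sum>m<n. ?f0 m) + c"
    by (rule sum_upd_nat) (use assms in auto)
  have s2: "(\<Sum>m<n. ((\<lambda>_. 0::nat)(i := q - c)) m) + 0 = (\<Sum>m<n. (0::nat)) + (q - c)"
    using sum_upd_nat[of i n "\<lambda>_. 0::nat" "q - c"] assms by simp
  have "?f0 j = 0" using assms by simp
  hence "(\<Sum>m<n. ac i j q c m) = q" using s1 s2 assms unfolding ac_def by simp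
  moreover have "\<forall>m\<ge>n. ac i j q c m = 0" using assms unfolding ac_def by auto
  ultimately show ?thesis unfolding mons_def by simp
qed

lemma tc_wedge: "i < j \<Longrightarrow> j < n \<Longrightarrow> (\<lambda>ij. tc i j q c (ij, \<alpha>)) \<in> wedge2 n"
  unfolding wedge2_def tc_def by auto

lemma tc_supp: "i < j \<Longrightarrow> j < n \<Longrightarrow> c \<le> q \<Longrightarrow> \<alpha> \<notin> mons n q \<Longrightarrow> tc i j q c (ij, \<alpha>) = 0"
  unfolding tc_def using ac_mons by auto

lemma pair2_delta:
  assumes "i < j" "j < n"
  shows "pair2 n \<phi> \<psi> (\<lambda>ij. if ij = (i, j) then 1 else 0) = \<phi> i * \<psi> j - \<phi> j * \<psi> i"
proof -
  have "pair2 n \<phi> \<psi> (\<lambda>ij. if ij = (i, j) then 1 else 0)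
      = (\<Sum>l<n. \<Sum>i'<n. (if (i', l) = (i, j) then 1 else 0) * (\<phi> i' * \<psi> l - \<phi> l * \<psi> i'))"
    by (rule pair2_full[symmetric]) (use assms in \<open>auto simp: wedge2_def\<close>)
  also have "\<dots> = (\<Sum>l<n. if l = j then \<phi> i * \<psi> l - \<phi> l * \<psi> i else 0)"
    using assms by (intro sum.cong refl) (auto simp: if_distrib[where f="\<lambda>x. x * _"] sum.delta cong: if_cong)
  also have "\<dots> = \<phi> i * \<psi> j - \<phi> j * \<psi> i" using assms by (simp add: sum.delta)
  finally show ?thesis .
qed

lemma Apol_ac:
  assumes "i < j" "j < n" "\<phi> i = 1" "\<phi> j = 0" "\<psi> i = 0" "\<psi> j = 1"
  shows "Apol n \<phi> \<psi> (ac i j q c) = monom 1 c"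
proof -
  have "Apol n \<phi> \<psi> (ac i j q c) = [:\<phi> j, \<psi> j:] ^ ac i j q c j * (\<Prod>m\<in>{..<n} - {j}. [:\<phi> m, \<psi> m:] ^ ac i j q c m)"
    unfolding Apol_def using assms by (intro prod.remove) auto
  also have "(\<Prod>m\<in>{..<n} - {j}. [:\<phi> m, \<psi> m:] ^ ac i j q c m) = 1"
  proof (rule prod.neutral, rule ballI)
    fix m assume "m \<in> {..<n} - {j}"
    thus "[:\<phi> m, \<psi> m:] ^ ac i j q c m = 1"
      using assms by (cases "m = i") (auto simp: ac_def one_pCons[symmetric])
  qed
  also have "[:\<phi> j, \<psi> j:] ^ ac i j q c j = monom 1 c"
    using assms by (simp add: ac_def monom_altdef)
  finally show ?thesis by simp
qed

lemma Pm_tc: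
  assumes "i < j" "j < n" "\<phi> i = 1" "\<phi> j = 0" "\<psi> i = 0" "\<psi> j = 1" "c \<le> q"
  shows "Pm n q \<phi> \<psi> (koszul n (tc i j q c)) = monom 1 c"
proof -
  have "Pm n q \<phi> \<psi> (koszul n (tc i j q c))
      = (\<Sum>\<alpha>\<in>mons n q. smult (pair2 n \<phi> \<psi> (\<lambda>ij. tc i j q c (ij, \<alpha>))) (Apol n \<phi> \<psi> \<alpha>))"
    by (rule P_koszul) (rule tc_wedge[OF assms(1,2)])
  also have "\<dots> = (\<Sum>\<alpha>\<in>mons n q. if \<alpha> = ac i j q c then Apol n \<phi> \<psi> \<alpha> else 0)"
  proof (intro sum.cong refl)
    fix \<alpha>
    show "smult (pair2 n \<phi> \<psi> (\<lambda>ij. tc i j q c (ij, \<alpha>))) (Apol n \<phi> \<psi> \<alpha>)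
        = (if \<alpha> = ac i j q c then Apol n \<phi> \<psi> \<alpha> else 0)"
    proof (cases "\<alpha> = ac i j q c")
      case True
      hence "(\<lambda>ij. tc i j q c (ij, \<alpha>)) = (\<lambda>ij. if ij = (i, j) then 1 else 0)"
        by (auto simp: tc_def fun_eq_iff)
      thus ?thesis using True pair2_delta[OF assms(1,2), of \<phi> \<psi>] assms by simp
    next
      case False
      hence "(\<lambda>ij. tc i j q c (ij, \<alpha>)) = (\<lambda>ij. 0)"
        by (auto simp: tc_def fun_eq_iff)
      thus ?thesis using False by (simp add: pair2_def)
    qed
  qed
  also have "\<dots> = Apol n \<phi> \<psi> (ac i j q c)"
    using ac_mons[OF assms(1,2,7)] by (simp add: sum.delta' finite_mons)
  also have "\<dots> = monom 1 c" by (rule Apol_ac[OF assms(1-6)])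
  finally show ?thesis .
qed

theorem lemma3p3:
  fixes n q :: nat and K :: "(nat \<times> nat \<Rightarrow> complex) set"
  assumes "K \<subseteq> wedge2 n" and "subspC K" and "dimC K + 3 = 2 * n"
    and "meets_Gr2 n K"
  shows "q + 1 \<le> dimW n K q"
proof -
  obtain \<phi> \<psi> i j where ij: "i < j" "j < n" and nm: "\<phi> i = 1" "\<phi> j = 0" "\<psi> i = 0" "\<psi> j = 1"
    and z: "\<forall>k\<in>K. pair2 n \<phi> \<psi> k = 0"
    using normalize_pair[OF assms(4)] by blast
  define Ker where "Ker = {u \<in> VSym n (q + 1). multV n u = 0}"
  define U where "U = koszul n ` KSym n K q"
  have KS: "Ker \<subseteq> vs.span ((\<lambda>p. (\<lambda>x. if x = p then (1::complex) else 0)) ` ({..<n} \<times> mons n (q + 1)))"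
    using VSym_span[of n "q + 1"] unfolding Ker_def by blast
  have fS: "finite ((\<lambda>p. (\<lambda>x. if x = p then (1::complex) else 0)) ` ({..<n} \<times> mons n (q + 1)))"
    using finite_mons by simp
  have UK: "U \<subseteq> Ker"
  proof
    fix v assume "v \<in> U"
    then obtain t where t: "t \<in> KSym n K q" and v: "v = koszul n t" unfolding U_def by blast
    have W: "(\<lambda>ij. t (ij, \<alpha>)) \<in> wedge2 n" for \<alpha> using t assms(1) unfolding KSym_def by blast
    have S: "t (ij, \<alpha>) = 0" if "\<alpha> \<notin> mons n q" for ij \<alpha> using t that unfolding KSym_def by blast
    have "koszul n t \<in> VSym n (Suc q)" by (rule koszul_VSym[OF W S])
    thus "v \<in> Ker" unfolding Ker_def v using multV_koszul[of n t] by simp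
  qed
  have PU: "Pm n q \<phi> \<psi> v = 0" if "v \<in> U" for v
  proof -
    obtain t where t: "t \<in> KSym n K q" and v: "v = koszul n t" using \<open>v \<in> U\<close> unfolding U_def by blast
    have W: "(\<lambda>ij. t (ij, \<alpha>)) \<in> wedge2 n" for \<alpha> using t assms(1) unfolding KSym_def by blast
    have "Pm n q \<phi> \<psi> v = (\<Sum>\<alpha>\<in>mons n q. smult (pair2 n \<phi> \<psi> (\<lambda>ij. t (ij, \<alpha>))) (Apol n \<phi> \<psi> \<alpha>))"
      unfolding v by (rule P_koszul[OF W])
    also have "\<dots> = 0"
    proof (rule sum.neutral, rule ballI)
      fix \<alpha>
      have "(\<lambda>ij. t (ij, \<alpha>)) \<in> K" using t unfolding KSym_def by blast
      thus "smult (pair2 n \<phi> \<psi> (\<lambda>ij. t (ij, \<alpha>))) (Apol n \<phi> \<psi> \<alpha>) = 0" using z by simp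
    qed
    finally show ?thesis .
  qed
  have uK: "koszul n (tc i j q c) \<in> Ker" if "c \<le> q" for c
  proof -
    have "koszul n (tc i j q c) \<in> VSym n (Suc q)"
      by (rule koszul_VSym) (use tc_wedge[OF ij] tc_supp[OF ij that] in auto)
    thus ?thesis unfolding Ker_def using multV_koszul[of n "tc i j q c"] by simp
  qed
  have Pu: "Pm n q \<phi> \<psi> (koszul n (tc i j q c)) = monom 1 c" if "c \<le> q" for c
    by (rule Pm_tc[OF ij nm that])
  have "dimC U + (q + 1) \<le> dimC Ker"
    by (rule dim_bound[OF KS fS UK PU uK Pu Pm_add Pm_scale Pm_zero])
  thus ?thesis unfolding dimW_def Ker_def U_def by simp
qed

end
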